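(* Let $A'\to A$ be a surjection in $\mathcal{C}_{\mathbb{E}}$ whose kernel is a $1$-dimensional $\mathbb{E}$-vector space. Let $V'$ be a free $A'$-module of rank $m$ and $V=V'\otimes_{A'}A$. Then the natural map $$\mathrm{GL}(V')\to\mathrm{PGL}(V')\times_{\mathrm{PGL}(V)}\mathrm{GL}(V)\times_{\mathrm{GL}(\det V)}\mathrm{GL}(\det V')$$ is an isomorphism of groups.
   Context: $\mathbb{E}$ is a finite extension of $\mathbb{Q}_\ell$ and $\mathcal{C}_{\mathbb{E}}$ the category of local Artin $\mathbb{E}$-algebras with residue field $\mathbb{E}$. For a free module $V$ over a ring $B$, $\mathrm{GL}(V)=\mathrm{Aut}_B(V)$, $\mathrm{PGL}(V)=\mathrm{GL}(V)/B^*$, and $\det V$ is the top exterior power, so $\mathrm{GL}(\det V)=B^*$; the maps in the fibre product are reduction along $A'\to A$, the projection $\mathrm{GL}\to\mathrm{PGL}$, and the determinant. *)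

theory Defs
  imports "Jordan_Normal_Form.Determinant" "HOL-Algebra.Coset"
begin

definition is_ring_hom_cls :: "('a::comm_ring_1 \<Rightarrow> 'b::comm_ring_1) \<Rightarrow> bool" where
  "is_ring_hom_cls h \<longleftrightarrow> h 1 = 1 \<and> (\<forall>x y. h (x + y) = h x + h y \<and> h (x * y) = h x * h y)"

definition is_ideal_cls :: "'a::comm_ring_1 set \<Rightarrow> bool" where
  "is_ideal_cls I \<longleftrightarrow> 0 \<in> I \<and> (\<forall>x\<in>I. \<forall>y\<in>I. x + y \<in> I) \<and> (\<forall>x\<in>I. \<forall>r. r * x \<in> I)"

definition artinian_cls :: "'a::comm_ring_1 itself \<Rightarrow> bool" where
  "artinian_cls _ \<longleftrightarrow> (\<forall>I :: nat \<Rightarrow> 'a set.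
     (\<forall>k. is_ideal_cls (I k) \<and> I (Suc k) \<subseteq> I k) \<longrightarrow> (\<exists>N. \<forall>k\<ge>N. I k = I N))"

definition local_ring_cls :: "'a::comm_ring_1 itself \<Rightarrow> bool" where
  "local_ring_cls _ \<longleftrightarrow> (0::'a) \<noteq> 1 \<and> is_ideal_cls {x::'a. \<not> x dvd 1}"

text \<open>An object of C_E: a local Artin E-algebra (structure map iota) whose residue field
  is E, i.e. E \<rightarrow> A/m is onto (every element is congruent mod m to some iota c).\<close>
definition in_C_E :: "('e::field \<Rightarrow> 'a::comm_ring_1) \<Rightarrow> bool" where
  "in_C_E \<iota> \<longleftrightarrow> is_ring_hom_cls \<iota> \<and> local_ring_cls TYPE('a) \<and> artinian_cls TYPE('a)
     \<and> (\<forall>x::'a. \<exists>c. \<not> (x - \<iota> c) dvd 1)"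

definition hom_C_E :: "('e::field \<Rightarrow> 'a::comm_ring_1) \<Rightarrow> ('e \<Rightarrow> 'b::comm_ring_1) \<Rightarrow> ('a \<Rightarrow> 'b) \<Rightarrow> bool" where
  "hom_C_E \<iota>' \<iota> f \<longleftrightarrow> is_ring_hom_cls f \<and> (\<forall>c. f (\<iota>' c) = \<iota> c)"

definition GL_grp :: "nat \<Rightarrow> ('a::comm_ring_1) mat monoid" where
  "GL_grp n = \<lparr>carrier = {M \<in> carrier_mat n n. invertible_mat M}, mult = (*), one = 1\<^sub>m n\<rparr>"

definition scalars :: "nat \<Rightarrow> ('a::comm_ring_1) mat set" where
  "scalars n = {c \<cdot>\<^sub>m 1\<^sub>m n | c. c dvd 1}"

definition PGL_grp :: "nat \<Rightarrow> ('a::comm_ring_1) mat set monoid" where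
  "PGL_grp n = GL_grp n Mod scalars n"

definition pgl_class :: "nat \<Rightarrow> ('a::comm_ring_1) mat \<Rightarrow> 'a mat set" where
  "pgl_class n M = scalars n #>\<^bsub>GL_grp n\<^esub> M"

text \<open>GL(det V) = B^*.\<close>
definition units_grp :: "('a::comm_ring_1) itself \<Rightarrow> 'a monoid" where
  "units_grp _ = \<lparr>carrier = {c. c dvd 1}, mult = (*), one = 1\<rparr>"

text \<open>Reduction along f : A' \<rightarrow> A (V = V' \<otimes> A).\<close>
definition GL_map :: "('a::comm_ring_1 \<Rightarrow> 'b::comm_ring_1) \<Rightarrow> 'a mat \<Rightarrow> 'b mat" where
  "GL_map f M = map_mat f M"

definition PGL_map :: "nat \<Rightarrow> ('a::comm_ring_1 \<Rightarrow> 'b::comm_ring_1) \<Rightarrow> 'a mat set \<Rightarrow> 'b mat set" where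
  "PGL_map n f P = pgl_class n (GL_map f (SOME M. M \<in> P))"

text \<open>The fibre product PGL(V') x_{PGL(V)} GL(V) x_{GL(det V)} GL(det V'),
  as a subgroup of the direct product.\<close>
definition fibre_grp :: "nat \<Rightarrow> ('a::comm_ring_1 \<Rightarrow> 'b::comm_ring_1)
    \<Rightarrow> ('a mat set \<times> 'b mat \<times> 'a) monoid" where
  "fibre_grp n f = (PGL_grp n \<times>\<times> GL_grp n \<times>\<times> units_grp TYPE('a))\<lparr>carrier :=
     {(P, g, d). P \<in> carrier (PGL_grp n) \<and> g \<in> carrier (GL_grp n) \<and> d \<in> carrier (units_grp TYPE('a))
        \<and> PGL_map n f P = pgl_class n g \<and> det g = f d}\<rparr>"

definition nat_map :: "nat \<Rightarrow> ('a::comm_ring_1 \<Rightarrow> 'b::comm_ring_1) \<Rightarrow> 'a mat \<Rightarrow> 'a mat set \<times> 'b mat \<times> 'a" where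
  "nat_map n f M = (pgl_class n M, GL_map f M, det M)"

end

theory Submission
  imports Defs
begin

lemma rh_to_crh: assumes "is_ring_hom_cls h" shows "comm_ring_hom h"
proof -
  have 1: "h 1 = 1" and a: "\<And>x y. h (x + y) = h x + h y" and m: "\<And>x y. h (x * y) = h x * h y"
    using assms unfolding is_ring_hom_cls_def by auto
  have z: "h 0 = 0" using a[of 0 0] by simp
  show ?thesis by unfold_locales (auto simp: 1 a m z)
qed

lemma local_one: assumes "local_ring_cls TYPE('a::comm_ring_1)" and "(x::'a) + y = 1"
  shows "x dvd 1 \<or> y dvd 1"
proof (rule ccontr)
  assume "\<not> (x dvd 1 \<or> y dvd 1)"
  then have "x \<in> {x::'a. \<not> x dvd 1}" "y \<in> {x::'a. \<not> x dvd 1}" by auto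
  then have "x + y \<in> {x::'a. \<not> x dvd 1}" using assms(1) unfolding local_ring_cls_def is_ideal_cls_def
    by blast
  then show False using assms(2) by simp
qed

lemma pow_nil: assumes "(k::'a::comm_ring_1) * k = 0" shows "(1 + k) ^ n = 1 + of_nat n * k"
proof (induction n)
  case 0 then show ?case by simp
next
  case (Suc n)
  have "(1 + k) ^ Suc n = (1 + k) * (1 + of_nat n * k)" using Suc by simp
  also have "\<dots> = 1 + of_nat (Suc n) * k + of_nat n * (k * k)" by (simp add: algebra_simps)
  finally show ?case using assms by simp
qed

lemma field_hom_unit: assumes "is_ring_hom_cls (g :: 'e::field \<Rightarrow> 'a::comm_ring_1)" "c \<noteq> 0"
  shows "g c * g (inverse c) = 1"
proof -
  have "g c * g (inverse c) = g (c * inverse c)" using assms(1) unfolding is_ring_hom_cls_def by simp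
  then show ?thesis using assms unfolding is_ring_hom_cls_def by simp
qed

lemma smult_one_mult: "A \<in> carrier_mat n n \<Longrightarrow> (c \<cdot>\<^sub>m 1\<^sub>m n) * A = c \<cdot>\<^sub>m (A :: 'a::comm_ring_1 mat)"
  by (simp add: mult_smult_assoc_mat[of _ n n])

lemma pgl_class_char: assumes "A \<in> carrier_mat n n"
  shows "pgl_class n A = {c \<cdot>\<^sub>m (A :: 'a::comm_ring_1 mat) | c. c dvd 1}"
  unfolding pgl_class_def r_coset_def scalars_def GL_grp_def using smult_one_mult[OF assms]
  by auto

lemma smult_smult_mat: "(a::'a::comm_ring_1) \<cdot>\<^sub>m (b \<cdot>\<^sub>m A) = (a * b) \<cdot>\<^sub>m A"
  by (rule eq_matI) auto

lemma one_smult_mat'[simp]: "(1::'a::comm_ring_1) \<cdot>\<^sub>m A = A"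
  by (rule eq_matI) auto

lemma GL_smult: assumes "A \<in> carrier (GL_grp n)" "(c::'a::comm_ring_1) dvd 1"
  shows "c \<cdot>\<^sub>m A \<in> carrier (GL_grp n)"
proof -
  have A: "A \<in> carrier_mat n n" "invertible_mat A" using assms unfolding GL_grp_def by auto
  then obtain B where B: "A * B = 1\<^sub>m n" "B * A = 1\<^sub>m (dim_row B)"
    unfolding invertible_mat_def inverts_mat_def by auto
  have Bc: "B \<in> carrier_mat n n"
    using B A by (metis carrier_matD(1) carrier_matD(2) carrier_matI index_mult_mat(2) index_mult_mat(3) index_one_mat(2) index_one_mat(3))
  obtain d where d: "c * d = 1" using assms(2) by (metis dvdE)
  have dc: "d * c = 1" using d by (simp add: mult.commute)
  have "(c \<cdot>\<^sub>m A) * (d \<cdot>\<^sub>m B) = 1\<^sub>m n"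
    using A Bc B d by (simp add: mult_smult_assoc_mat[of _ n n] mult_smult_distrib[of _ n n] smult_smult_mat dc)
  moreover have "(d \<cdot>\<^sub>m B) * (c \<cdot>\<^sub>m A) = 1\<^sub>m n"
    using A Bc B d by (simp add: mult_smult_assoc_mat[of _ n n] mult_smult_distrib[of _ n n] smult_smult_mat dc)
  ultimately show ?thesis using A Bc unfolding GL_grp_def invertible_mat_def inverts_mat_def square_mat.simps
    by auto
qed

lemma GL_carrier: "A \<in> carrier (GL_grp n) \<longleftrightarrow> A \<in> carrier_mat n n \<and> invertible_mat A"
  unfolding GL_grp_def by simp

lemma GL_inv: assumes "A \<in> carrier (GL_grp n)"
  obtains B where "B \<in> carrier_mat n n" "A * B = 1\<^sub>m n" "B * A = 1\<^sub>m n"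
proof -
  have A: "A \<in> carrier_mat n n" "invertible_mat A" using assms unfolding GL_grp_def by auto
  then obtain B where B: "A * B = 1\<^sub>m n" "B * A = 1\<^sub>m (dim_row B)"
    unfolding invertible_mat_def inverts_mat_def by auto
  have Bc: "B \<in> carrier_mat n n"
    using B A by (metis carrier_matD(1) carrier_matD(2) carrier_matI index_mult_mat(2) index_mult_mat(3) index_one_mat(2) index_one_mat(3))
  show ?thesis using that Bc B Bc by auto
qed

lemma GL_det_unit: assumes "A \<in> carrier (GL_grp n)" shows "det (A::'a::comm_ring_1 mat) dvd 1"
proof -
  obtain B where B: "B \<in> carrier_mat n n" "A * B = 1\<^sub>m n" using GL_inv[OF assms] by metis
  have A: "A \<in> carrier_mat n n" using assms GL_carrier by auto
  have "det A * det B = 1" using det_mult[OF A B(1)] B(2) by simp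
  then show ?thesis by (metis dvdI)
qed

lemma GL_map_smult: assumes "comm_ring_hom f" shows "GL_map f (c \<cdot>\<^sub>m A) = f c \<cdot>\<^sub>m GL_map f A"
proof -
  interpret comm_ring_hom f by fact
  show ?thesis unfolding GL_map_def by (rule eq_matI) (auto simp: hom_mult)
qed

lemma GL_map_mult: "comm_ring_hom f \<Longrightarrow> A \<in> carrier_mat n n \<Longrightarrow> B \<in> carrier_mat n n \<Longrightarrow>
   GL_map f (A * B) = GL_map f A * GL_map f B"
  unfolding GL_map_def
  by (rule semiring_hom.mat_hom_mult) (auto intro: comm_ring_hom.axioms ring_hom.axioms)

lemma GL_map_carrier: assumes f: "comm_ring_hom f" and A: "A \<in> carrier (GL_grp n)"
  shows "GL_map f A \<in> carrier (GL_grp n)"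
proof -
  obtain B where B: "B \<in> carrier_mat n n" "A * B = 1\<^sub>m n" "B * A = 1\<^sub>m n" using GL_inv[OF A] by metis
  have Ac: "A \<in> carrier_mat n n" using A GL_carrier by auto
  interpret comm_ring_hom f by fact
  have one: "GL_map f (1\<^sub>m n) = 1\<^sub>m n" unfolding GL_map_def
    by (rule eq_matI) auto
  have "GL_map f A * GL_map f B = 1\<^sub>m n" "GL_map f B * GL_map f A = 1\<^sub>m n"
    using GL_map_mult[OF f Ac B(1)] GL_map_mult[OF f B(1) Ac] B one by auto
  then show ?thesis using Ac B(1) unfolding GL_carrier invertible_mat_def inverts_mat_def GL_map_def
    by (auto intro!: exI[of _ "map_mat f B"])
qed


lemma pgl_class_eq: assumes "A \<in> carrier_mat n n" "B \<in> carrier_mat n n"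
  shows "pgl_class n A = pgl_class n B \<longleftrightarrow> (\<exists>c. c dvd 1 \<and> A = c \<cdot>\<^sub>m (B::'a::comm_ring_1 mat))"
proof
  assume eq: "pgl_class n A = pgl_class n B"
  have "A \<in> pgl_class n A" unfolding pgl_class_char[OF assms(1)]
    by (rule CollectI, rule exI[of _ 1]) simp
  then have "A \<in> {c \<cdot>\<^sub>m B | c. c dvd 1}" using eq unfolding pgl_class_char[OF assms(2)] by simp
  then show "\<exists>c. c dvd 1 \<and> A = c \<cdot>\<^sub>m B" by blast
next
  assume "\<exists>c. c dvd 1 \<and> A = c \<cdot>\<^sub>m B"
  then obtain c where c: "c dvd 1" "A = c \<cdot>\<^sub>m B" by auto
  from c(1) obtain d where d: "1 = c * d" by (rule dvdE)
  show "pgl_class n A = pgl_class n B"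
    unfolding pgl_class_char[OF assms(1)] pgl_class_char[OF assms(2)]
  proof (intro equalityI subsetI)
    fix X assume "X \<in> {e \<cdot>\<^sub>m A | e. e dvd 1}"
    then obtain e where e: "e dvd 1" "X = e \<cdot>\<^sub>m A" by blast
    have "X = (e * c) \<cdot>\<^sub>m B" using e c by (simp add: smult_smult_mat)
    moreover have "e * c dvd 1" using e c by simp
    ultimately show "X \<in> {e \<cdot>\<^sub>m B | e. e dvd 1}" by blast
  next
    fix X assume "X \<in> {e \<cdot>\<^sub>m B | e. e dvd 1}"
    then obtain e where e: "e dvd 1" "X = e \<cdot>\<^sub>m B" by blast
    have "(e * d) \<cdot>\<^sub>m A = (e * (c * d)) \<cdot>\<^sub>m B" unfolding c(2) smult_smult_mat by (simp add: ac_simps)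
    then have "e \<cdot>\<^sub>m B = (e * d) \<cdot>\<^sub>m A" unfolding d[symmetric] by simp
    moreover have "d dvd 1" using d mult.commute[of c d] by (metis dvdI)
    then have "e * d dvd 1" using e by simp
    ultimately show "X \<in> {e \<cdot>\<^sub>m A | e. e dvd 1}" using e by blast
  qed
qed

lemma pgl_mult: assumes A: "A \<in> carrier_mat n n" and B: "B \<in> carrier_mat n n"
  shows "pgl_class n A \<otimes>\<^bsub>PGL_grp n\<^esub> pgl_class n B = pgl_class n (A * (B::'a::comm_ring_1 mat))"
proof -
  have AB: "A * B \<in> carrier_mat n n" using assms by simp
  have m: "\<And>c d. (c \<cdot>\<^sub>m A) * (d \<cdot>\<^sub>m B) = (c * d) \<cdot>\<^sub>m (A * B)"
    using assms by (simp add: mult_smult_assoc_mat[of _ n n] mult_smult_distrib[of _ n n] smult_smult_mat mult.commute)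
  have "pgl_class n A \<otimes>\<^bsub>PGL_grp n\<^esub> pgl_class n B = (\<Union>h\<in>pgl_class n A. \<Union>k\<in>pgl_class n B. {h * k})"
    by (simp add: PGL_grp_def FactGroup_def set_mult_def GL_grp_def)
  also have "\<dots> = pgl_class n (A * B)"
  proof (intro equalityI subsetI)
    fix X assume "X \<in> (\<Union>h\<in>pgl_class n A. \<Union>k\<in>pgl_class n B. {h * k})"
    then obtain h k where hk: "h \<in> pgl_class n A" "k \<in> pgl_class n B" "X = h * k" by blast
    from hk(1) obtain c where c: "c dvd 1" "h = c \<cdot>\<^sub>m A" unfolding pgl_class_char[OF A] by blast
    from hk(2) obtain d where d: "d dvd 1" "k = d \<cdot>\<^sub>m B" unfolding pgl_class_char[OF B] by blast
    have "X = (c * d) \<cdot>\<^sub>m (A * B)" using hk(3) c(2) d(2) m by simp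
    moreover have "c * d dvd 1" using c d by simp
    ultimately show "X \<in> pgl_class n (A * B)" unfolding pgl_class_char[OF AB] by blast
  next
    fix X assume "X \<in> pgl_class n (A * B)"
    then obtain c where c: "c dvd 1" "X = c \<cdot>\<^sub>m (A * B)" unfolding pgl_class_char[OF AB] by blast
    have h: "c \<cdot>\<^sub>m A \<in> pgl_class n A" unfolding pgl_class_char[OF A] using c(1) by blast
    have k: "1 \<cdot>\<^sub>m B \<in> pgl_class n B" unfolding pgl_class_char[OF B] by (rule CollectI, rule exI[of _ 1]) simp
    have "X = (c \<cdot>\<^sub>m A) * (1 \<cdot>\<^sub>m B)" unfolding m c(2) by simp
    then show "X \<in> (\<Union>h\<in>pgl_class n A. \<Union>k\<in>pgl_class n B. {h * k})" using h k by blast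
  qed
  finally show ?thesis .
qed

lemma PGL_map_class: assumes f: "comm_ring_hom f" and A: "A \<in> carrier_mat n n"
  shows "PGL_map n f (pgl_class n A) = pgl_class n (GL_map f A)"
proof -
  interpret comm_ring_hom f by fact
  have "A \<in> pgl_class n A" unfolding pgl_class_char[OF A]
    by (rule CollectI, rule exI[of _ 1]) simp
  then have "(SOME M. M \<in> pgl_class n A) \<in> pgl_class n A" by (rule someI)
  then obtain c where c: "c dvd 1" "(SOME M. M \<in> pgl_class n A) = c \<cdot>\<^sub>m A"
    unfolding pgl_class_char[OF A] by blast
  have fA: "GL_map f A \<in> carrier_mat n n" using A unfolding GL_map_def by auto
  show ?thesis unfolding PGL_map_def c(2) GL_map_smult[OF f]
    by (rule pgl_class_eq[THEN iffD2]) (use fA c in \<open>auto intro!: exI[of _ "f c"]\<close>)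
qed

lemma ker_facts:
  assumes iC: "in_C_E (i'::'e::field_char_0 \<Rightarrow> 'a::comm_ring_1)" and iB: "in_C_E (i::'e \<Rightarrow> 'b::comm_ring_1)"
    and h: "hom_C_E i' i f" and t0: "t \<noteq> 0" and K: "{x. f x = 0} = {i' c * t | c. True}"
  shows "t * t = 0" "\<not> t dvd 1"
proof -
  have hi': "is_ring_hom_cls i'" and loc: "local_ring_cls TYPE('a)" using iC unfolding in_C_E_def by auto
  have locB: "local_ring_cls TYPE('b)" using iB unfolding in_C_E_def by auto
  have hf: "is_ring_hom_cls f" using h unfolding hom_C_E_def by auto
  interpret F: comm_ring_hom f using rh_to_crh[OF hf] .
  interpret I: comm_ring_hom i' using rh_to_crh[OF hi'] .
  have "i' 1 * t \<in> {x. f x = 0}" unfolding K by blast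
  then have ft: "f t = 0" by simp
  show nu: "\<not> t dvd 1"
  proof
    assume "t dvd 1"
    then obtain s where "1 = t * s" by (rule dvdE)
    then have "f (t * s) = 1" by (metis F.hom_one)
    then have "(0::'b) = 1" using ft by (simp add: F.hom_mult)
    then show False using locB unfolding local_ring_cls_def by simp
  qed
  have "f (t * t) = 0" using ft by (simp add: F.hom_mult)
  then have "t * t \<in> {i' c * t | c. True}" using K by blast
  then obtain e where e: "t * t = i' e * t" by blast
  show "t * t = 0"
  proof (cases "e = 0")
    case True then show ?thesis using e by simp
  next
    case False
    define s where "s = t * i' (inverse e)"
    have inv: "i' e * i' (inverse e) = 1" using field_hom_unit[OF hi' False] .
    have ss: "s * s = s" unfolding s_def
    proof -
      have "t * i' (inverse e) * (t * i' (inverse e)) = (t * t) * i' (inverse e) * i' (inverse e)"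
        by (simp add: ac_simps)
      also have "\<dots> = t * i' (inverse e) * (i' e * i' (inverse e))" unfolding e by (simp add: ac_simps)
      finally show "t * i' (inverse e) * (t * i' (inverse e)) = t * i' (inverse e)" using inv by simp
    qed
    have "s + (1 - s) = 1" by simp
    then have "s dvd 1 \<or> (1 - s) dvd 1" using local_one[OF loc] by blast
    then show ?thesis
    proof
      assume "s dvd 1"
      then have "t dvd 1" unfolding s_def by (simp add: dvd_mult_unit_iff)
      then show ?thesis using nu by simp
    next
      assume u: "(1 - s) dvd 1"
      have "s * (1 - s) = 0" using ss by (simp add: algebra_simps)
      moreover obtain w where w: "1 = (1 - s) * w" using u by (rule dvdE)
      ultimately have "s = 0" by (metis mult.assoc mult_1_right mult_zero_left)
      then have "t * i' (inverse e) * i' e = 0" unfolding s_def by simp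
      then have "t = 0" using inv by (simp add: ac_simps)
      then show ?thesis by simp
    qed
  qed
qed

lemma ker_t: assumes K: "{x. f x = 0} = {i' c * t | c. True}" and "f (x::'a::comm_ring_1) = (0::'b::comm_ring_1)"
  shows "\<exists>e. x = i' e * t"
  using assms by blast

lemma ft0: assumes "is_ring_hom_cls i'" and K: "{x. f x = 0} = {i' c * t | c. True}"
  shows "f (t::'a::comm_ring_1) = (0::'b::comm_ring_1)"
proof -
  have "i' 1 = 1" using assms(1) unfolding is_ring_hom_cls_def by simp
  moreover have "i' 1 * t \<in> {x. f x = 0}" unfolding K by blast
  ultimately show ?thesis by simp
qed

lemma ker_one: assumes f: "comm_ring_hom f" and K: "{x. f x = 0} = {i' c * t | c. True}"
  and "f (c::'a::comm_ring_1) = (1::'b::comm_ring_1)"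
  shows "\<exists>e. c = 1 + i' e * t"
proof -
  interpret comm_ring_hom f by fact
  have "f (c - 1) = 0" using assms(3) by (simp add: hom_minus)
  then obtain e where "c - 1 = i' e * t" using ker_t[OF K] by blast
  then show ?thesis by (metis add.commute diff_add_cancel)
qed

lemma unit_of_ker: assumes "(t::'a::comm_ring_1) * t = 0" shows "(1 + k * t) dvd 1"
proof -
  have "(1 + k * t) * (1 - k * t) = 1 - k * k * (t * t)" by (simp add: algebra_simps)
  then show ?thesis using assms by (metis dvdI mult_zero_right diff_zero)
qed

lemma unit_lift: assumes f: "comm_ring_hom f" and K: "{x. f x = 0} = {i' c * t | c. True}"
  and tt: "t * t = 0" and s: "surj f" and u: "f (u::'a::comm_ring_1) dvd (1::'b::comm_ring_1)"
  shows "u dvd 1"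
proof -
  interpret comm_ring_hom f by fact
  obtain w where w: "1 = f u * w" using u by (rule dvdE)
  obtain v where v: "f v = w" using s by (metis surjD)
  have "f (u * v) = 1" using w v by (simp add: hom_mult)
  then obtain e where "u * v = 1 + i' e * t" using ker_one[OF f K] by blast
  then have "(u * v) dvd 1" using unit_of_ker[OF tt] by simp
  then show ?thesis using dvd_mult_left by blast
qed

lemma inj_scalar: assumes hi': "is_ring_hom_cls (i'::'e::field_char_0 \<Rightarrow> 'a::comm_ring_1)"
  and f: "comm_ring_hom f" and K: "{x. f x = 0} = {i' c * t | c. True}"
  and t0: "t \<noteq> 0" and tt: "t * t = 0" and m: "m \<ge> 1" and cm: "c ^ m = 1" and fc: "f c = (1::'b::comm_ring_1)"
  shows "c = 1"
proof -
  interpret I: comm_ring_hom i' using rh_to_crh[OF hi'] .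
  obtain e where e: "c = 1 + i' e * t" using ker_one[OF f K fc] by blast
  have "(i' e * t) * (i' e * t) = (i' e * i' e) * (t * t)" by (simp add: ac_simps)
  then have "(i' e * t) * (i' e * t) = 0" using tt by simp
  from pow_nil[OF this, of m] have "c ^ m = 1 + of_nat m * (i' e * t)" unfolding e .
  then have "of_nat m * (i' e * t) = 0" using cm by simp
  then have z: "i' (of_nat m * e) * t = 0" by (simp add: I.hom_mult I.hom_of_nat mult.assoc)
  show ?thesis
  proof (cases "e = 0")
    case True then show ?thesis using e by simp
  next
    case False
    then have ne: "of_nat m * e \<noteq> 0" using m by simp
    have "i' (of_nat m * e) * i' (inverse (of_nat m * e)) = 1" using field_hom_unit[OF hi' ne] .
    then have "t = 0" using z by (metis mult.commute mult_1 mult.assoc mult_zero_left)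
    then show ?thesis using t0 by simp
  qed
qed

lemma root_ex: assumes hi': "is_ring_hom_cls (i'::'e::field_char_0 \<Rightarrow> 'a::comm_ring_1)"
  and f: "comm_ring_hom f" and K: "{x. f x = 0} = {i' c * t | c. True}"
  and tt: "t * t = 0" and m: "m \<ge> 1"
  shows "\<exists>l. f l = (1::'b::comm_ring_1) \<and> l ^ m = 1 + i' e * t"
proof -
  interpret I: comm_ring_hom i' using rh_to_crh[OF hi'] .
  interpret F: comm_ring_hom f by fact
  define l where "l = 1 + i' (e / of_nat m) * t"
  have "(i' (e / of_nat m) * t) * (i' (e / of_nat m) * t) = (i' (e / of_nat m) * i' (e / of_nat m)) * (t * t)" by (simp add: ac_simps)
  then have "(i' (e / of_nat m) * t) * (i' (e / of_nat m) * t) = 0" using tt by simp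
  from pow_nil[OF this, of m] have "l ^ m = 1 + of_nat m * (i' (e / of_nat m) * t)" unfolding l_def .
  also have "\<dots> = 1 + i' e * t"
  proof -
    have em: "e = of_nat m * (e / of_nat m)" using m by simp
    have "i' e = of_nat m * i' (e / of_nat m)" by (subst em) (simp only: I.hom_mult I.hom_of_nat)
    then show ?thesis by (simp add: mult.assoc)
  qed
  finally have "l ^ m = 1 + i' e * t" .
  moreover have "f l = 1" unfolding l_def using ft0[OF hi' K] by (simp add: F.hom_add F.hom_mult)
  ultimately show ?thesis by blast
qed

lemma fibre_carrier: "carrier (fibre_grp n f) = {(P, g, d). P \<in> carrier (PGL_grp n) \<and> g \<in> carrier (GL_grp n) \<and> d \<in> carrier (units_grp TYPE('a))
        \<and> PGL_map n f P = pgl_class n g \<and> det g = f (d::'a::comm_ring_1)}"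
  unfolding fibre_grp_def by simp

lemma fibre_mult: "mult (fibre_grp n f) x y = mult (PGL_grp n \<times>\<times> GL_grp n \<times>\<times> units_grp TYPE('a::comm_ring_1)) x y"
  unfolding fibre_grp_def by simp

lemma pgl_class_carrier: "M \<in> carrier (GL_grp n) \<Longrightarrow> pgl_class n M \<in> carrier (PGL_grp n)"
  unfolding PGL_grp_def FactGroup_def RCOSETS_def pgl_class_def by auto

lemma smult_cancel_unit: assumes N: "N \<in> carrier (GL_grp n)" and n: "n \<ge> 1"
  and eq: "c \<cdot>\<^sub>m N = (N::'a::comm_ring_1 mat)" shows "c = 1"
proof -
  obtain B where B: "B \<in> carrier_mat n n" "N * B = 1\<^sub>m n" using GL_inv[OF N] by metis
  have Nc: "N \<in> carrier_mat n n" using N GL_carrier by auto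
  have "(c \<cdot>\<^sub>m N) * B = c \<cdot>\<^sub>m 1\<^sub>m n" using Nc B by (simp add: mult_smult_assoc_mat[of _ n n])
  then have "c \<cdot>\<^sub>m 1\<^sub>m n = 1\<^sub>m n" using eq B by simp
  then have "(c \<cdot>\<^sub>m 1\<^sub>m n) $$ (0,0) = (1\<^sub>m n :: 'a mat) $$ (0,0)" by simp
  then show ?thesis using n by simp
qed

theorem lemma14:
  fixes \<iota>' :: "'e::field_char_0 \<Rightarrow> 'a::comm_ring_1"
    and \<iota> :: "'e \<Rightarrow> 'b::comm_ring_1"
    and f :: "'a \<Rightarrow> 'b"
    and m :: nat
  assumes "m \<ge> 1" and "in_C_E \<iota>'" and "in_C_E \<iota>"
    and "hom_C_E \<iota>' \<iota> f" and "surj f"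
    and "\<exists>t. t \<noteq> 0 \<and> {x. f x = 0} = {\<iota>' c * t | c. True}"
  shows "nat_map m f \<in> iso (GL_grp m) (fibre_grp m f)"
proof -
  obtain t where t0: "t \<noteq> 0" and K: "{x. f x = 0} = {\<iota>' c * t | c. True}" using assms(6) by blast
  have hi': "is_ring_hom_cls \<iota>'" using assms(2) unfolding in_C_E_def by auto
  have hf: "is_ring_hom_cls f" using assms(4) unfolding hom_C_E_def by auto
  have fh: "comm_ring_hom f" using rh_to_crh[OF hf] .
  interpret F: comm_ring_hom f by fact
  have tt: "t * t = 0" using ker_facts[OF assms(2,3,4) t0 K] by simp
  have detmap: "\<And>M. det (GL_map f M) = f (det M)" unfolding GL_map_def by simp
  have GLc: "\<And>M. M \<in> carrier (GL_grp m) \<Longrightarrow> M \<in> carrier_mat m m" using GL_carrier by blast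
  have incar: "nat_map m f M \<in> carrier (fibre_grp m f)" if M: "M \<in> carrier (GL_grp m)" for M :: "'a mat"
    unfolding nat_map_def fibre_carrier
    using pgl_class_carrier[OF M] GL_map_carrier[OF fh M] GL_det_unit[OF M] PGL_map_class[OF fh GLc[OF M]]
      detmap by (simp add: units_grp_def)
  have hom: "nat_map m f \<in> hom (GL_grp m) (fibre_grp m f)"
  proof (rule homI)
    fix M :: "'a mat" assume "M \<in> carrier (GL_grp m)" then show "nat_map m f M \<in> carrier (fibre_grp m f)" by (rule incar)
  next
    fix M N :: "'a mat" assume M: "M \<in> carrier (GL_grp m)" and N: "N \<in> carrier (GL_grp m)"
    show "nat_map m f (M \<otimes>\<^bsub>GL_grp m\<^esub> N) = nat_map m f M \<otimes>\<^bsub>fibre_grp m f\<^esub> nat_map m f N"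
      unfolding fibre_mult nat_map_def
      using pgl_mult[OF GLc[OF M] GLc[OF N]] GL_map_mult[OF fh GLc[OF M] GLc[OF N]] det_mult[OF GLc[OF M] GLc[OF N]]
      by (simp add: GL_grp_def units_grp_def)
  qed
  have inj: "inj_on (nat_map m f) (carrier (GL_grp m))"
  proof (rule inj_onI)
    fix M N :: "'a mat" assume M: "M \<in> carrier (GL_grp m)" and N: "N \<in> carrier (GL_grp m)" and eq: "nat_map m f M = nat_map m f N"
    then have e1: "pgl_class m M = pgl_class m N" and e2: "GL_map f M = GL_map f N" and e3: "det M = det N"
      unfolding nat_map_def by auto
    obtain c where c: "c dvd 1" "M = c \<cdot>\<^sub>m N" using e1 pgl_class_eq[OF GLc[OF M] GLc[OF N]] by blast
    have "f c \<cdot>\<^sub>m GL_map f N = GL_map f N" using e2 c(2) GL_map_smult[OF fh] by simp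
    then have fc: "f c = 1" using smult_cancel_unit[OF GL_map_carrier[OF fh N] assms(1)] by blast
    have dcN: "dim_col N = m" using GLc[OF N] by simp
    have cm: "c ^ m * det N = det N" using e3 unfolding c(2) det_smult dcN .
    obtain w where w: "1 = det N * w" using GL_det_unit[OF N] by (rule dvdE)
    have "c ^ m = c ^ m * (det N * w)" using w by simp
    also have "\<dots> = (c ^ m * det N) * w" by (simp add: mult.assoc)
    finally have "c ^ m = 1" using cm w by simp
    then have "c = 1" using inj_scalar[OF hi' fh K t0 tt assms(1) _ fc] by blast
    then show "M = N" using c by simp
  qed
  have sur: "carrier (fibre_grp m f) \<subseteq> nat_map m f ` carrier (GL_grp m)"
  proof
    fix X assume X: "X \<in> carrier (fibre_grp m f)"
    then obtain P g d where Xd: "X = (P, g, d)" and P: "P \<in> carrier (PGL_grp m)" and g: "g \<in> carrier (GL_grp m)"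
      and d: "d dvd 1" and Pg: "PGL_map m f P = pgl_class m g" and dg: "det g = f d"
      unfolding fibre_carrier by (auto simp: units_grp_def)
    obtain M0 where M0: "M0 \<in> carrier (GL_grp m)" and PM0: "P = pgl_class m M0"
      using P unfolding PGL_grp_def FactGroup_def RCOSETS_def pgl_class_def by auto
    have "pgl_class m g = pgl_class m (GL_map f M0)" using Pg PM0 PGL_map_class[OF fh GLc[OF M0]] by simp
    moreover have fM0: "GL_map f M0 \<in> carrier (GL_grp m)" using GL_map_carrier[OF fh M0] .
    ultimately obtain u where u: "u dvd 1" "g = u \<cdot>\<^sub>m GL_map f M0"
      using pgl_class_eq[OF GLc[OF g] GLc[OF fM0]] by blast
    obtain u' where u': "f u' = u" using assms(5) by (metis surjD)
    have u'1: "u' dvd 1" using unit_lift[OF fh K tt assms(5)] u' u(1) by blast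
    define M1 where "M1 = u' \<cdot>\<^sub>m M0"
    have M1: "M1 \<in> carrier (GL_grp m)" unfolding M1_def using GL_smult[OF M0 u'1] .
    have fM1: "GL_map f M1 = g" unfolding M1_def GL_map_smult[OF fh] u' u(2) ..
    have dM1: "det M1 dvd 1" using GL_det_unit[OF M1] .
    then obtain dinv where dinv: "1 = det M1 * dinv" by (rule dvdE)
    define r where "r = d * dinv"
    have "f r = f d * f dinv" unfolding r_def by (simp add: F.hom_mult)
    also have "\<dots> = f (det M1) * f dinv" using dg fM1 detmap[of M1] by simp
    also have "\<dots> = f (det M1 * dinv)" by (simp add: F.hom_mult)
    also have "\<dots> = 1" using dinv[symmetric] by simp
    finally obtain e where e: "r = 1 + \<iota>' e * t" using ker_one[OF fh K] by blast
    obtain l where l: "f l = 1" "l ^ m = 1 + \<iota>' e * t" using root_ex[OF hi' fh K tt assms(1)] by blast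
    have rd: "r * det M1 = d" unfolding r_def using dinv by (simp add: ac_simps)
    have "l ^ m dvd 1" using unit_of_ker[OF tt, of "\<iota>' e"] l(2) by simp
    moreover have "l dvd l ^ m" using assms(1) by simp
    ultimately have l1: "l dvd 1" by (rule dvd_trans[rotated])
    define M where "M = l \<cdot>\<^sub>m M1"
    have M: "M \<in> carrier (GL_grp m)" unfolding M_def using GL_smult[OF M1 l1] .
    have lu: "l * u' dvd 1" using l1 u'1 by simp
    have "M = (l * u') \<cdot>\<^sub>m M0" unfolding M_def M1_def smult_smult_mat ..
    then have "pgl_class m M = pgl_class m M0"
      using pgl_class_eq[OF GLc[OF M] GLc[OF M0]] lu by blast
    moreover have "GL_map f M = g" unfolding M_def GL_map_smult[OF fh] fM1 l(1) by simp
    moreover have "det M = d" unfolding M_def using GLc[OF M1] rd l(2) e by (simp add: det_smult)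
    ultimately have "nat_map m f M = X" unfolding nat_map_def Xd PM0 by simp
    then show "X \<in> nat_map m f ` carrier (GL_grp m)" using M by blast
  qed
  have "bij_betw (nat_map m f) (carrier (GL_grp m)) (carrier (fibre_grp m f))"
    unfolding bij_betw_def using inj sur hom hom_carrier by blast
  then show ?thesis using hom unfolding iso_def by blast
qed

end
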